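(* Let $q$ be odd, $\alpha,\beta\in\mathbb{F}_{q^2}$ with $\alpha\ne0$ and $(\beta^q-\beta)^2+4\alpha^{q+1}$ a nonsquare in $\mathbb{F}_q$, and let $R_1=(0,\epsilon,1)$. Then (1) $\mathrm{pedal}(R_1)$ consists exactly of the points $Q_x=(x,\,2\alpha x^2+(\beta-\beta^q)x^{q+1}+\epsilon,\,1)$ with $x\in\mathbb{F}_{q^2}$ satisfying $\alpha x^2-\alpha^q x^{2q}+(\beta-\beta^q)x^{q+1}+2\epsilon=0$; (2) the points of $\mathrm{pedal}(R_1)$ lie on the lines of the Baer pencil joining the vertex $U_\infty=(1,0,0)$ to the Baer subline $\{E_{s-\epsilon}=(0,s-\epsilon,1): s\in\mathbb{F}_q\}\cup\{(0,1,0)\}$.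
   Context: Points of $\mathrm{PG}(2,q^2)$ have homogeneous coordinates $(x,y,z)$. $\zeta$ is a primitive element of $\mathbb{F}_{q^2}$ and $\epsilon=\zeta^{(q+1)/2}$ (so $\epsilon^q=-\epsilon$ and $\epsilon^2$ is a primitive element of $\mathbb{F}_q$). $\mathcal U_{\alpha\beta}=\{(x,\alpha x^2+\beta x^{q+1}+r,1): x\in\mathbb{F}_{q^2}, r\in\mathbb{F}_q\}\cup\{(0,1,0)\}$, which under the hypotheses is a unital (a set of $q^3+1$ points meeting every line in $1$ or $q+1$ points). For a point $P$ not on the unital, $\mathrm{pedal}(P)$ is the set of points of contact of the $q+1$ tangent lines (lines meeting the unital in exactly one point) through $P$. A Baer pencil is the set of $q+1$ lines joining a vertex point to the $q+1$ points of a Baer subline (a set of points of a line projectively equivalent to $\mathrm{PG}(1,q)$). *)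

theory Defs
  imports Main
begin

definition pt :: "'a::field \<times> 'a \<times> 'a \<Rightarrow> ('a \<times> 'a \<times> 'a) set" where
  "pt v = {(c * fst v, c * fst (snd v), c * snd (snd v)) | c. c \<noteq> 0}"

definition points :: "('a::field \<times> 'a \<times> 'a) set set" where
  "points = {pt v | v. v \<noteq> (0, 0, 0)}"

definition line_of :: "'a::field \<Rightarrow> 'a \<Rightarrow> 'a \<Rightarrow> ('a \<times> 'a \<times> 'a) set set" where
  "line_of a b c = {pt (x, y, z) | x y z. (x, y, z) \<noteq> (0, 0, 0) \<and> a * x + b * y + c * z = 0}"

definition lines :: "('a::field \<times> 'a \<times> 'a) set set set" where
  "lines = {line_of a b c | a b c. (a, b, c) \<noteq> (0, 0, 0)}"

text \<open>The set U_{alpha beta} (q is the order of the subfield F_q; F_q = {r. r^q = r}).\<close>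
definition unitalU :: "nat \<Rightarrow> 'a::field \<Rightarrow> 'a \<Rightarrow> ('a \<times> 'a \<times> 'a) set set" where
  "unitalU q \<alpha> \<beta> =
     {pt (x, \<alpha> * x ^ 2 + \<beta> * x ^ (q + 1) + r, 1) | x r. r ^ q = r} \<union> {pt (0, 1, 0)}"

definition tangent_line :: "('a::field \<times> 'a \<times> 'a) set set \<Rightarrow> ('a \<times> 'a \<times> 'a) set set \<Rightarrow> bool" where
  "tangent_line U L \<longleftrightarrow> L \<in> lines \<and> card (L \<inter> U) = 1"

definition pedal :: "('a::field \<times> 'a \<times> 'a) set set \<Rightarrow> ('a \<times> 'a \<times> 'a) set \<Rightarrow> ('a \<times> 'a \<times> 'a) set set" where
  "pedal U P = {Q. \<exists>L. tangent_line U L \<and> P \<in> L \<and> L \<inter> U = {Q}}"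

definition primitive_elem :: "'a::{field,finite} \<Rightarrow> bool" where
  "primitive_elem z \<longleftrightarrow> z \<noteq> 0 \<and> (\<forall>x. x \<noteq> 0 \<longrightarrow> (\<exists>k::nat. x = z ^ k))"

definition join_lines :: "('a::field \<times> 'a \<times> 'a) set \<Rightarrow> ('a \<times> 'a \<times> 'a) set \<Rightarrow> ('a \<times> 'a \<times> 'a) set set set" where
  "join_lines P Q = {L. L \<in> lines \<and> P \<in> L \<and> Q \<in> L}"

definition pencil :: "('a::field \<times> 'a \<times> 'a) set \<Rightarrow> ('a \<times> 'a \<times> 'a) set set \<Rightarrow> ('a \<times> 'a \<times> 'a) set set set" where
  "pencil V B = (\<Union>P\<in>B. join_lines V P)"

end

theory Submission imports Defs "HOL-Algebra.Sylow" "HOL-Algebra.Multiplicative_Group" "HOL-Computational_Algebra.Primes"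
begin


definition addgrp :: "'a::field monoid" where
  "addgrp = \<lparr>carrier = UNIV, monoid.mult = (+), one = 0\<rparr>"

lemma addgrp_group: "group (addgrp :: 'a::field monoid)"
  by (rule groupI) (auto simp: addgrp_def add.assoc intro: exI[of _ "- x" for x])

lemma addgrp_pow:
  fixes H :: "'a::field set"
  shows "x [^]\<^bsub>addgrp\<lparr>carrier := H\<rparr>\<^esub> k = of_nat k * x"
  by (induction k) (auto simp: addgrp_def algebra_simps)

lemma one_addgrp: "\<one>\<^bsub>(addgrp :: 'a::field monoid)\<lparr>carrier := H\<rparr>\<^esub> = 0"
  by (simp add: addgrp_def)

lemma prime_dvd_card_CHAR:
  assumes r: "prime r" and dv: "r dvd card (UNIV :: 'a::{field,finite} set)"
  shows "r = CHAR('a)"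
proof -
  let ?G = "addgrp :: 'a monoid"
  define a where "a = multiplicity r (card (UNIV :: 'a set))"
  define m where "m = card (UNIV :: 'a set) div r ^ a"
  have cpos: "card (UNIV :: 'a set) > 0" by (simp add: finite_UNIV_card_ge_0)
  have "r ^ a dvd card (UNIV :: 'a set)" unfolding a_def by (rule multiplicity_dvd)
  hence ord: "order ?G = r ^ a * m" unfolding m_def order_def addgrp_def by simp
  have a1: "a \<ge> 1" unfolding a_def using dv r cpos
    by (simp add: Suc_le_eq prime_multiplicity_gt_zero_iff)
  obtain H where H: "subgroup H ?G" "card H = r ^ a"
    using sylow_thm[OF r addgrp_group ord] by (auto simp: addgrp_def)
  have "r ^ 1 \<le> r ^ a" by (rule power_increasing) (use a1 prime_gt_0_nat[OF r] in auto)
  hence "card H \<ge> 2" using H(2) prime_ge_2_nat[OF r] by simp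
  have "\<not> H \<subseteq> {0}"
  proof
    assume "H \<subseteq> {0}" hence "card H \<le> card {0::'a}" by (rule card_mono[rotated]) simp
    thus False using \<open>card H \<ge> 2\<close> by simp
  qed
  then obtain x where x: "x \<in> H" "x \<noteq> 0" by auto
  interpret GH: group "?G\<lparr>carrier := H\<rparr>"
    by (rule subgroup.subgroup_is_group[OF H(1) addgrp_group])
  have "x [^]\<^bsub>?G\<lparr>carrier := H\<rparr>\<^esub> order (?G\<lparr>carrier := H\<rparr>) = \<one>\<^bsub>?G\<lparr>carrier := H\<rparr>\<^esub>"
    by (rule GH.pow_order_eq_1) (use x in simp)
  hence "of_nat (r ^ a) * x = (0::'a)"
    using H(2) by (simp add: addgrp_pow order_def one_addgrp)
  hence "of_nat (r ^ a) = (0::'a)" using x by simp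
  hence "CHAR('a) dvd r ^ a" using of_nat_eq_0_iff_char_dvd by blast
  moreover have "prime CHAR('a)" by (rule prime_CHAR_semidom) (simp add: finite_imp_CHAR_pos)
  ultimately have "CHAR('a) dvd r" using prime_dvd_power by blast
  thus ?thesis using \<open>prime CHAR('a)\<close> r by (metis primes_dvd_imp_eq)
qed


lemma q_char_power:
  assumes card: "card (UNIV :: 'a::{field,finite} set) = q ^ 2"
  shows "\<exists>k. q = CHAR('a) ^ k"
proof -
  have cpos: "card (UNIV :: 'a set) > 0" by (simp add: finite_UNIV_card_ge_0)
  hence qpos: "q > 0" using card by (cases q) auto
  have pr: "prime CHAR('a)" by (rule prime_CHAR_semidom) (simp add: finite_imp_CHAR_pos)
  obtain k n where kn: "\<not> CHAR('a) dvd n" "q = n * CHAR('a) ^ k"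
    using prime_power_canonical[OF pr qpos] by blast
  have "n = 1"
  proof (rule ccontr)
    assume "n \<noteq> 1"
    then obtain r where r: "prime r" "r dvd n" using prime_factor_nat by blast
    hence "r dvd card (UNIV :: 'a set)" using kn(2) card by (simp add: power2_eq_square)
    hence "r = CHAR('a)" by (rule prime_dvd_card_CHAR[OF r(1)])
    thus False using r kn by simp
  qed
  thus ?thesis using kn by auto
qed

lemma frob_add:
  assumes card: "card (UNIV :: 'a::{field,finite} set) = q ^ 2"
  shows "(x + y :: 'a) ^ q = x ^ q + y ^ q"
proof -
  obtain k where k: "q = CHAR('a) ^ k" using q_char_power[OF card] by blast
  have pr: "prime CHAR('a)" by (rule prime_CHAR_semidom) (simp add: finite_imp_CHAR_pos)
  show ?thesis by (rule freshmans_dream'[OF pr k])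
qed

lemma power_card_same:
  fixes x :: "'a :: {field,finite}"
  shows "x ^ card (UNIV :: 'a set) = x"
proof (cases "x = 0")
  case False
  have "x * (\<Prod>y\<in>UNIV-{0}. x * y) = x * x ^ (card (UNIV :: 'a set) - 1) * \<Prod>(UNIV-{0})"
    by (simp add: prod.distrib mult_ac)
  also have "x * x ^ (card (UNIV :: 'a set) - 1) = x ^ Suc (card (UNIV :: 'a set) - 1)"
    by (subst power_Suc) auto
  also have "Suc (card (UNIV :: 'a set) - 1) = card (UNIV :: 'a set)"
    using finite_UNIV_card_ge_0[where ?'a = 'a] by simp
  also have "(\<Prod>y\<in>UNIV-{0}. x * y) = (\<Prod>y\<in>UNIV-{0}. y)"
    by (rule prod.reindex_bij_witness[of _ "\<lambda>y. y / x" "\<lambda>y. x * y"]) (use False in auto)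
  finally show ?thesis
    by simp
qed (use finite_UNIV_card_ge_0[where ?'a = 'a] in auto)

lemma eps_facts:
  fixes \<zeta> :: "'a::{field,finite}"
  assumes card: "card (UNIV :: 'a set) = q ^ 2" and odd_q: "odd q"
    and prim: "primitive_elem \<zeta>"
  shows "\<zeta> ^ ((q + 1) div 2) \<noteq> 0 \<and> (\<zeta> ^ ((q + 1) div 2)) ^ q = - (\<zeta> ^ ((q + 1) div 2))
         \<and> (\<zeta> ^ ((q + 1) div 2)) ^ q \<noteq> \<zeta> ^ ((q + 1) div 2)"
proof -
  define h where "h = (q + 1) div 2"
  define k where "k = h * (q - 1)"
  define n where "n = card (UNIV :: 'a set)"
  have z0: "\<zeta> \<noteq> 0" using prim unfolding primitive_elem_def by simp
  have n2: "n \<ge> 2"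
  proof -
    have "{0::'a, 1} \<subseteq> UNIV" by simp
    hence "card {0::'a, 1} \<le> n" unfolding n_def by (rule card_mono[rotated]) simp
    thus ?thesis by simp
  qed
  have q1: "q \<ge> 1" using odd_q by (cases q) auto
  have qh: "q + 1 = 2 * h" unfolding h_def using odd_q by simp
  have nk: "n - 1 = 2 * k"
  proof -
    have "2 * k = (q + 1) * (q - 1)" unfolding k_def using qh by simp
    also have "\<dots> = q * q - 1" using q1 by (simp add: algebra_simps)
    finally show ?thesis unfolding n_def card by (simp add: power2_eq_square)
  qed
  have kpos: "k > 0" using nk n2 by simp
  have zn: "\<zeta> ^ (n - 1) = 1"
  proof -
    have "\<zeta> * \<zeta> ^ (n - 1) = \<zeta> ^ n" using n2 by (metis Suc_diff_1 not_numeral_le_zero not_gr_zero power_Suc)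
    also have "\<dots> = \<zeta>" unfolding n_def by (rule power_card_same)
    finally show ?thesis using z0 by (metis mult_cancel_left1)
  qed
  define w where "w = \<zeta> ^ k"
  have w2: "w * w = 1" unfolding w_def using zn nk by (simp add: power_add[symmetric] mult_2)
  have w1: "w \<noteq> 1"
  proof
    assume "w = 1"
    have sub: "UNIV - {0} \<subseteq> (\<lambda>j. \<zeta> ^ j) ` {..<k}"
    proof
      fix x :: 'a assume "x \<in> UNIV - {0}"
      then obtain i where i: "x = \<zeta> ^ i" using prim unfolding primitive_elem_def by auto
      have "\<zeta> ^ i = \<zeta> ^ (k * (i div k) + i mod k)" by (simp only: mult.commute[of k] div_mult_mod_eq)
      also have "\<dots> = (\<zeta> ^ k) ^ (i div k) * \<zeta> ^ (i mod k)" by (simp only: power_add power_mult)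
      also have "\<dots> = \<zeta> ^ (i mod k)" using \<open>w = 1\<close> unfolding w_def by simp
      finally show "x \<in> (\<lambda>j. \<zeta> ^ j) ` {..<k}" using i kpos by auto
    qed
    have "card (UNIV - {0::'a}) \<le> card ((\<lambda>j. \<zeta> ^ j) ` {..<k})"
      by (rule card_mono[OF _ sub]) simp
    also have "\<dots> \<le> k" using card_image_le[of "{..<k}" "\<lambda>j. \<zeta> ^ j"] by simp
    finally have "n - 1 \<le> k" unfolding n_def by (simp add: card_Diff_singleton)
    thus False using nk kpos by simp
  qed
  have wm: "w = -1"
  proof -
    have "(w - 1) * (w + 1) = 0" using w2 by (simp add: algebra_simps)
    thus ?thesis using w1 by (simp add: eq_neg_iff_add_eq_0)
  qed
  define e where "e = \<zeta> ^ h"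
  have e0: "e \<noteq> 0" unfolding e_def using z0 by simp
  have eq1: "e ^ (q - 1) = w" unfolding e_def w_def k_def by (simp add: power_mult)
  have eq: "e ^ q = e * w" using q1 eq1 by (metis Suc_diff_1 less_le_trans zero_less_one power_Suc)
  have "e ^ q = - e" using eq wm by simp
  moreover have "e ^ q \<noteq> e" using eq e0 w1 by simp
  ultimately show ?thesis using e0 unfolding e_def h_def by simp
qed



lemma pt_self: "v \<in> pt v"
  unfolding pt_def by (cases v) (auto intro!: exI[of _ 1])

lemma pt_eq1: "pt (x, y, 1) = pt (x', y', (1::'a::field)) \<longleftrightarrow> x = x' \<and> y = y'"
proof
  assume "pt (x, y, 1) = pt (x', y', 1)"
  hence "(x', y', 1) \<in> pt (x, y, 1)" using pt_self by metis
  then obtain c where "c \<noteq> 0" "(x', y', 1) = (c * x, c * y, c * 1)" unfolding pt_def by auto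
  thus "x = x' \<and> y = y'" by simp
qed simp

lemma pt_ne_inf: "pt (0, 1, 0) \<noteq> pt (x, y, (1::'a::field))"
proof
  assume "pt (0, 1, 0) = pt (x, y, 1)"
  hence "(x, y, 1) \<in> pt (0, 1, 0)" using pt_self by metis
  thus False unfolding pt_def by auto
qed

lemma pt_in_line:
  assumes "(x, y, z) \<noteq> (0, 0, (0::'a::field))"
  shows "pt (x, y, z) \<in> line_of a b c \<longleftrightarrow> a * x + b * y + c * z = 0"
proof
  assume "pt (x, y, z) \<in> line_of a b c"
  then obtain x' y' z' where h: "pt (x, y, z) = pt (x', y', z')" "a * x' + b * y' + c * z' = 0"
    unfolding line_of_def by auto
  hence "(x, y, z) \<in> pt (x', y', z')" using pt_self by metis
  then obtain k where "(x, y, z) = (k * x', k * y', k * z')" unfolding pt_def by auto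
  thus "a * x + b * y + c * z = 0" using h(2)
    by (simp add: algebra_simps) (metis distrib_left mult.left_commute mult_zero_right)
next
  assume "a * x + b * y + c * z = 0"
  thus "pt (x, y, z) \<in> line_of a b c" using assms unfolding line_of_def by blast
qed

lemma line_scale:
  assumes "k \<noteq> (0::'a::field)"
  shows "line_of (k * a) (k * b) (k * c) = line_of a b c"
proof -
  have "\<And>x y z. k * a * x + k * b * y + k * c * z = 0 \<longleftrightarrow> a * x + b * y + c * z = 0"
  proof -
    fix x y z
    have "k * a * x + k * b * y + k * c * z = k * (a * x + b * y + c * z)" by (simp add: algebra_simps)
    thus "k * a * x + k * b * y + k * c * z = 0 \<longleftrightarrow> a * x + b * y + c * z = 0" using assms by simp
  qed
  thus ?thesis unfolding line_of_def by simp
qed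

definition NN :: "('a::field \<Rightarrow> 'a) \<Rightarrow> 'a \<Rightarrow> 'a \<Rightarrow> 'a \<Rightarrow> 'a" where
  "NN \<phi> \<alpha> \<beta> t = \<phi> \<alpha> * (\<phi> t)^2 - \<alpha> * t^2 + (\<phi> \<beta> - \<beta>) * t * \<phi> t"

definition FF :: "('a::field \<Rightarrow> 'a) \<Rightarrow> 'a \<Rightarrow> 'a \<Rightarrow> 'a \<Rightarrow> 'a \<Rightarrow> 'a \<Rightarrow> 'a" where
  "FF \<phi> \<alpha> \<beta> \<epsilon> m x = \<alpha> * x^2 + \<beta> * x * \<phi> x - m * x - \<epsilon>"

definition UU :: "('a::field \<Rightarrow> 'a) \<Rightarrow> 'a \<Rightarrow> 'a \<Rightarrow> ('a \<times> 'a \<times> 'a) set set" where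
  "UU \<phi> \<alpha> \<beta> = {pt (x, \<alpha> * x^2 + \<beta> * x * \<phi> x + r, 1) | x r. \<phi> r = r} \<union> {pt (0, 1, 0)}"

context
  fixes \<phi> :: "'a::field \<Rightarrow> 'a" and \<alpha> \<beta> \<epsilon> :: 'a
  assumes phi_add: "\<And>x y. \<phi> (x + y) = \<phi> x + \<phi> y"
    and phi_mult: "\<And>x y. \<phi> (x * y) = \<phi> x * \<phi> y"
    and phi_phi: "\<And>x. \<phi> (\<phi> x) = x"
    and phi_one: "\<phi> 1 = 1"
    and phi_eps: "\<phi> \<epsilon> = - \<epsilon>" and eps0: "\<epsilon> \<noteq> 0" and two0: "(2::'a) \<noteq> 0"
    and nonsq: "\<not> (\<exists>y. \<phi> y = y \<and> y^2 = (\<phi> \<beta> - \<beta>)^2 + 4 * \<alpha> * \<phi> \<alpha>)"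
begin

lemma phi_zero: "\<phi> 0 = 0"
  using phi_add[of 0 0] by (metis add.right_neutral add_left_cancel)

lemma phi_minus: "\<phi> (- x) = - \<phi> x"
  using phi_add[of x "-x"] phi_zero by (simp add: eq_neg_iff_add_eq_0 add.commute)

lemma phi_diff: "\<phi> (x - y) = \<phi> x - \<phi> y"
  using phi_add[of x "-y"] phi_minus[of y] by simp

lemma phi_power: "\<phi> (x ^ n) = (\<phi> x) ^ n"
  by (induction n) (simp_all add: phi_one phi_mult)

lemma phi_two: "\<phi> 2 = 2"
  using phi_add[of 1 1] phi_one by (simp add: one_add_one)

lemma phi_eq0: "\<phi> x = 0 \<longleftrightarrow> x = 0"
  by (metis phi_phi phi_zero)

lemma phi_inverse: "\<phi> (inverse x) = inverse (\<phi> x)"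
proof (cases "x = 0")
  case True thus ?thesis by (simp add: phi_zero)
next
  case False
  hence "\<phi> x * \<phi> (inverse x) = 1" using phi_mult[of x "inverse x"] phi_one by simp
  thus ?thesis using False phi_eq0 by (metis inverse_unique)
qed

lemma phi_divide: "\<phi> (x / y) = \<phi> x / \<phi> y"
  by (simp add: divide_inverse phi_mult phi_inverse)

lemmas phi_simps = phi_add phi_mult phi_phi phi_one phi_eps phi_zero phi_minus phi_diff phi_power phi_two

lemma NN_phi: "\<phi> (NN \<phi> \<alpha> \<beta> t) = - NN \<phi> \<alpha> \<beta> t"
  unfolding NN_def by (simp add: phi_simps algebra_simps)

lemma NN_scale: "\<phi> c = c \<Longrightarrow> NN \<phi> \<alpha> \<beta> (c * t) = c^2 * NN \<phi> \<alpha> \<beta> t"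
  unfolding NN_def by (simp add: phi_simps algebra_simps power2_eq_square)

lemma aniso:
  assumes t0: "t \<noteq> 0" shows "NN \<phi> \<alpha> \<beta> t \<noteq> 0"
proof
  assume N0: "NN \<phi> \<alpha> \<beta> t = 0"
  have pt0: "\<phi> t \<noteq> 0" using t0 phi_eq0 by simp
  define s where "s = t * \<phi> t"
  define T where "T = \<alpha> * t^2 + \<phi> \<alpha> * (\<phi> t)^2"
  define D where "D = (\<phi> \<beta> - \<beta>)^2 + 4 * \<alpha> * \<phi> \<alpha>"
  have s0: "s \<noteq> 0" unfolding s_def using t0 pt0 by simp
  have ps: "\<phi> s = s" unfolding s_def by (simp add: phi_simps mult.commute)
  have pT: "\<phi> T = T" unfolding T_def by (simp add: phi_simps add.commute)
  have e: "\<phi> \<alpha> * (\<phi> t)^2 = \<alpha> * t^2 - (\<phi> \<beta> - \<beta>) * t * \<phi> t"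
    using N0 unfolding NN_def by (simp add: algebra_simps)
  have "s^2 * D = (\<phi> \<beta> - \<beta>)^2 * s^2 + 4 * \<alpha> * t^2 * (\<phi> \<alpha> * (\<phi> t)^2)"
    unfolding s_def D_def by (simp add: algebra_simps power2_eq_square)
  also have "\<dots> = (\<phi> \<beta> - \<beta>)^2 * s^2 + 4 * \<alpha> * t^2 * (\<alpha> * t^2 - (\<phi> \<beta> - \<beta>) * t * \<phi> t)"
    by (simp only: e)
  also have "\<dots> = (\<alpha> * t^2 + (\<alpha> * t^2 - (\<phi> \<beta> - \<beta>) * t * \<phi> t))^2"
    unfolding s_def by (simp add: algebra_simps power2_eq_square)
  also have "\<dots> = T^2" unfolding T_def by (simp only: e)
  finally have "T^2 = s^2 * D" by simp
  hence "(T / s)^2 = D" using s0 by (simp add: power_divide)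
  moreover have "\<phi> (T / s) = T / s" by (simp add: phi_divide ps pT)
  ultimately show False using nonsq unfolding D_def by blast
qed

lemma key:
  "\<phi> (FF \<phi> \<alpha> \<beta> \<epsilon> m (x + t)) - FF \<phi> \<alpha> \<beta> \<epsilon> m (x + t)
   = (\<phi> (FF \<phi> \<alpha> \<beta> \<epsilon> m x) - FF \<phi> \<alpha> \<beta> \<epsilon> m x) + NN \<phi> \<alpha> \<beta> t
     + (2 * \<phi> \<alpha> * \<phi> x + \<phi> \<beta> * x - \<phi> m - \<beta> * x) * \<phi> t
     - (2 * \<alpha> * x + \<beta> * \<phi> x - m - \<phi> \<beta> * \<phi> x) * t"
  unfolding FF_def NN_def by (simp add: phi_simps algebra_simps power2_eq_square)


lemma S_char:
  "UU \<phi> \<alpha> \<beta> \<inter> line_of (-m) 1 (-\<epsilon>) = {pt (x, m * x + \<epsilon>, 1) | x. \<phi> (FF \<phi> \<alpha> \<beta> \<epsilon> m x) = FF \<phi> \<alpha> \<beta> \<epsilon> m x}"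
proof (intro equalityI subsetI)
  fix P assume P: "P \<in> UU \<phi> \<alpha> \<beta> \<inter> line_of (-m) 1 (-\<epsilon>)"
  have "pt (0, 1, 0) \<notin> line_of (-m) 1 (-\<epsilon>)" by (subst pt_in_line) simp_all
  hence "P \<noteq> pt (0, 1, 0)" using P by auto
  then obtain x r where xr: "\<phi> r = r" "P = pt (x, \<alpha> * x^2 + \<beta> * x * \<phi> x + r, 1)"
    using P unfolding UU_def by auto
  have "-m * x + 1 * (\<alpha> * x^2 + \<beta> * x * \<phi> x + r) + -\<epsilon> * 1 = 0"
    using P xr(2) by (subst pt_in_line[symmetric]) auto
  hence y: "\<alpha> * x^2 + \<beta> * x * \<phi> x + r = m * x + \<epsilon>" by (simp add: algebra_simps)
  have F: "FF \<phi> \<alpha> \<beta> \<epsilon> m x = - r" unfolding FF_def using y by (simp add: algebra_simps)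
  have "\<phi> (FF \<phi> \<alpha> \<beta> \<epsilon> m x) = FF \<phi> \<alpha> \<beta> \<epsilon> m x" unfolding F by (simp add: phi_minus xr(1))
  thus "P \<in> {pt (x, m * x + \<epsilon>, 1) | x. \<phi> (FF \<phi> \<alpha> \<beta> \<epsilon> m x) = FF \<phi> \<alpha> \<beta> \<epsilon> m x}"
    using xr(2) y by auto
next
  fix P assume "P \<in> {pt (x, m * x + \<epsilon>, 1) | x. \<phi> (FF \<phi> \<alpha> \<beta> \<epsilon> m x) = FF \<phi> \<alpha> \<beta> \<epsilon> m x}"
  then obtain x where x: "P = pt (x, m * x + \<epsilon>, 1)" "\<phi> (FF \<phi> \<alpha> \<beta> \<epsilon> m x) = FF \<phi> \<alpha> \<beta> \<epsilon> m x" by auto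
  define r where "r = - FF \<phi> \<alpha> \<beta> \<epsilon> m x"
  have r: "\<phi> r = r" unfolding r_def using x(2) by (simp add: phi_minus)
  have "\<alpha> * x^2 + \<beta> * x * \<phi> x + r = m * x + \<epsilon>" unfolding r_def FF_def by (simp add: algebra_simps)
  hence "P = pt (x, \<alpha> * x^2 + \<beta> * x * \<phi> x + r, 1)" using x(1) by simp
  hence "P \<in> UU \<phi> \<alpha> \<beta>" unfolding UU_def using r by blast
  moreover have "P \<in> line_of (-m) 1 (-\<epsilon>)" unfolding x(1) by (subst pt_in_line) simp_all
  ultimately show "P \<in> UU \<phi> \<alpha> \<beta> \<inter> line_of (-m) 1 (-\<epsilon>)" by simp
qed

lemma tangent_unique:
  assumes "\<phi> m = 2 * \<phi> \<alpha> * \<phi> x0 + (\<phi> \<beta> - \<beta>) * x0"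
    and "\<phi> (FF \<phi> \<alpha> \<beta> \<epsilon> m x0) = FF \<phi> \<alpha> \<beta> \<epsilon> m x0"
    and "\<phi> (FF \<phi> \<alpha> \<beta> \<epsilon> m x1) = FF \<phi> \<alpha> \<beta> \<epsilon> m x1"
  shows "x1 = x0"
proof -
  have m: "m = 2 * \<alpha> * x0 + (\<beta> - \<phi> \<beta>) * \<phi> x0"
    using arg_cong[OF assms(1), of \<phi>] by (simp add: phi_simps)
  have "\<phi> (FF \<phi> \<alpha> \<beta> \<epsilon> m (x0 + (x1 - x0))) - FF \<phi> \<alpha> \<beta> \<epsilon> m (x0 + (x1 - x0))
   = (\<phi> (FF \<phi> \<alpha> \<beta> \<epsilon> m x0) - FF \<phi> \<alpha> \<beta> \<epsilon> m x0) + NN \<phi> \<alpha> \<beta> (x1 - x0)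
     + (2 * \<phi> \<alpha> * \<phi> x0 + \<phi> \<beta> * x0 - \<phi> m - \<beta> * x0) * \<phi> (x1 - x0)
     - (2 * \<alpha> * x0 + \<beta> * \<phi> x0 - m - \<phi> \<beta> * \<phi> x0) * (x1 - x0)" by (rule key)
  also have "(2 * \<phi> \<alpha> * \<phi> x0 + \<phi> \<beta> * x0 - \<phi> m - \<beta> * x0) = 0" using assms(1) by (simp add: algebra_simps)
  also have "(2 * \<alpha> * x0 + \<beta> * \<phi> x0 - m - \<phi> \<beta> * \<phi> x0) = 0" using m by (simp add: algebra_simps)
  finally have "NN \<phi> \<alpha> \<beta> (x1 - x0) = 0" using assms(2,3) by simp
  thus ?thesis using aniso[of "x1 - x0"] by auto
qed

lemma tangent_exist:
  assumes F0: "\<phi> (FF \<phi> \<alpha> \<beta> \<epsilon> m x0) = FF \<phi> \<alpha> \<beta> \<epsilon> m x0"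
    and A0: "2 * \<phi> \<alpha> * \<phi> x0 + \<phi> \<beta> * x0 - \<phi> m - \<beta> * x0 \<noteq> 0"
  shows "\<exists>x1. x1 \<noteq> x0 \<and> \<phi> (FF \<phi> \<alpha> \<beta> \<epsilon> m x1) = FF \<phi> \<alpha> \<beta> \<epsilon> m x1"
proof -
  define A where "A = 2 * \<phi> \<alpha> * \<phi> x0 + \<phi> \<beta> * x0 - \<phi> m - \<beta> * x0"
  have pA: "\<phi> A = 2 * \<alpha> * x0 + \<beta> * \<phi> x0 - m - \<phi> \<beta> * \<phi> x0" unfolding A_def by (simp add: phi_simps)
  have A0': "A \<noteq> 0" using A0 unfolding A_def .
  have pA0: "\<phi> A \<noteq> 0" using A0' phi_eq0 by simp
  define t0 where "t0 = \<epsilon> * A"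
  have t00: "t0 \<noteq> 0" unfolding t0_def using eps0 A0' by simp
  have pt0: "\<phi> t0 = - \<epsilon> * \<phi> A" unfolding t0_def by (simp add: phi_simps)
  define l0 where "l0 = A * \<phi> t0 - \<phi> A * t0"
  have l0: "l0 = - 2 * \<epsilon> * A * \<phi> A" unfolding l0_def pt0 unfolding t0_def by (simp add: algebra_simps)
  have l00: "l0 \<noteq> 0" unfolding l0 using eps0 A0' pA0 two0 by simp
  have pl0: "\<phi> l0 = - l0" unfolding l0 by (simp add: phi_simps algebra_simps)
  define N0 where "N0 = NN \<phi> \<alpha> \<beta> t0"
  have N00: "N0 \<noteq> 0" unfolding N0_def by (rule aniso[OF t00])
  have pN0: "\<phi> N0 = - N0" unfolding N0_def by (rule NN_phi)
  define lam where "lam = - l0 / N0"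
  have plam: "\<phi> lam = lam" unfolding lam_def by (simp add: phi_divide phi_minus pl0 pN0)
  have lam0: "lam \<noteq> 0" unfolding lam_def using l00 N00 by simp
  have lamN: "lam * N0 = - l0" unfolding lam_def using N00 by simp
  define t1 where "t1 = lam * t0"
  have t10: "t1 \<noteq> 0" unfolding t1_def using lam0 t00 by simp
  have "\<phi> (FF \<phi> \<alpha> \<beta> \<epsilon> m (x0 + t1)) - FF \<phi> \<alpha> \<beta> \<epsilon> m (x0 + t1)
   = (\<phi> (FF \<phi> \<alpha> \<beta> \<epsilon> m x0) - FF \<phi> \<alpha> \<beta> \<epsilon> m x0) + NN \<phi> \<alpha> \<beta> t1
     + (2 * \<phi> \<alpha> * \<phi> x0 + \<phi> \<beta> * x0 - \<phi> m - \<beta> * x0) * \<phi> t1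
     - (2 * \<alpha> * x0 + \<beta> * \<phi> x0 - m - \<phi> \<beta> * \<phi> x0) * t1" by (rule key)
  also have "\<dots> = NN \<phi> \<alpha> \<beta> t1 + A * \<phi> t1 - \<phi> A * t1"
  proof -
    have c1: "2 * \<phi> \<alpha> * \<phi> x0 + \<phi> \<beta> * x0 - \<phi> m - \<beta> * x0 = A" by (simp add: A_def)
    have c2: "2 * \<alpha> * x0 + \<beta> * \<phi> x0 - m - \<phi> \<beta> * \<phi> x0 = \<phi> A" by (simp add: pA)
    show ?thesis using F0 by (simp only: c1 c2) simp
  qed
  also have "\<dots> = lam^2 * N0 + lam * l0"
    unfolding t1_def N0_def l0_def using NN_scale[OF plam, of t0] plam
    by (simp add: phi_mult algebra_simps)
  also have "\<dots> = lam * (lam * N0 + l0)" by (simp add: algebra_simps power2_eq_square)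
  also have "\<dots> = 0" using lamN by simp
  finally have "\<phi> (FF \<phi> \<alpha> \<beta> \<epsilon> m (x0 + t1)) = FF \<phi> \<alpha> \<beta> \<epsilon> m (x0 + t1)" by simp
  moreover have "x0 + t1 \<noteq> x0" using t10 by simp
  ultimately show ?thesis by blast
qed

lemma FF_special:
  "\<phi> (FF \<phi> \<alpha> \<beta> \<epsilon> (2 * \<alpha> * x0 + (\<beta> - \<phi> \<beta>) * \<phi> x0) x0) - FF \<phi> \<alpha> \<beta> \<epsilon> (2 * \<alpha> * x0 + (\<beta> - \<phi> \<beta>) * \<phi> x0) x0
   = \<alpha> * x0^2 - \<phi> \<alpha> * (\<phi> x0)^2 + (\<beta> - \<phi> \<beta>) * x0 * \<phi> x0 + 2 * \<epsilon>"
  unfolding FF_def by (simp add: phi_simps algebra_simps power2_eq_square)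

lemma pedal_char:
  "pedal (UU \<phi> \<alpha> \<beta>) (pt (0, \<epsilon>, 1)) =
     {pt (x, 2 * \<alpha> * x^2 + (\<beta> - \<phi> \<beta>) * x * \<phi> x + \<epsilon>, 1) | x.
        \<alpha> * x^2 - \<phi> \<alpha> * (\<phi> x)^2 + (\<beta> - \<phi> \<beta>) * x * \<phi> x + 2 * \<epsilon> = 0}"
proof (intro equalityI subsetI)
  fix Q assume "Q \<in> pedal (UU \<phi> \<alpha> \<beta>) (pt (0, \<epsilon>, 1))"
  then obtain L where L: "tangent_line (UU \<phi> \<alpha> \<beta>) L" "pt (0, \<epsilon>, 1) \<in> L" "L \<inter> UU \<phi> \<alpha> \<beta> = {Q}"
    unfolding pedal_def by auto
  obtain a b c where abc: "L = line_of a b c" "(a, b, c) \<noteq> (0, 0, 0)"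
    using L(1) unfolding tangent_line_def lines_def by auto
  have R: "a * 0 + b * \<epsilon> + c * 1 = 0" using L(2) abc(1) by (subst pt_in_line[symmetric]) auto
  show "Q \<in> {pt (x, 2 * \<alpha> * x^2 + (\<beta> - \<phi> \<beta>) * x * \<phi> x + \<epsilon>, 1) | x.
        \<alpha> * x^2 - \<phi> \<alpha> * (\<phi> x)^2 + (\<beta> - \<phi> \<beta>) * x * \<phi> x + 2 * \<epsilon> = 0}"
  proof (cases "b = 0")
    case True
    hence c0: "c = 0" using R by simp
    have "pt (0, 1, 0) \<in> L" unfolding abc(1) using True c0 by (subst pt_in_line) simp_all
    moreover have "pt (0, 1, 0) \<in> UU \<phi> \<alpha> \<beta>" unfolding UU_def by simp
    moreover have "pt (0, 0, 1) \<in> L" unfolding abc(1) using True c0 by (subst pt_in_line) simp_all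
    moreover have "pt (0, 0, 1) \<in> UU \<phi> \<alpha> \<beta>" unfolding UU_def
      by (rule UnI1, rule CollectI, rule exI[of _ 0], rule exI[of _ 0]) (simp add: phi_zero)
    ultimately have "pt (0, 1, 0) = pt (0, 0, (1::'a))" using L(3) by blast
    thus ?thesis using pt_ne_inf by blast
  next
    case False
    define m where "m = - a / b"
    have "line_of (b * (-m)) (b * 1) (b * (-\<epsilon>)) = line_of (-m) 1 (-\<epsilon>)" by (rule line_scale[OF False])
    moreover have "b * (-m) = a" using False unfolding m_def by simp
    moreover have "b * (-\<epsilon>) = c"
    proof -
      have "b * \<epsilon> + c = 0" using R by simp
      hence "c = - (b * \<epsilon>)" by (rule add_eq_0_iff[THEN iffD1])
      thus ?thesis by simp
    qed
    ultimately have Lm: "L = line_of (-m) 1 (-\<epsilon>)" using abc(1) by simp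
    have S: "{pt (x, m * x + \<epsilon>, 1) | x. \<phi> (FF \<phi> \<alpha> \<beta> \<epsilon> m x) = FF \<phi> \<alpha> \<beta> \<epsilon> m x} = {Q}"
      using L(3) S_char[of m] unfolding Lm by (simp add: Int_commute)
    hence "Q \<in> {pt (x, m * x + \<epsilon>, 1) | x. \<phi> (FF \<phi> \<alpha> \<beta> \<epsilon> m x) = FF \<phi> \<alpha> \<beta> \<epsilon> m x}" by simp
    then obtain x0 where x0: "Q = pt (x0, m * x0 + \<epsilon>, 1)" "\<phi> (FF \<phi> \<alpha> \<beta> \<epsilon> m x0) = FF \<phi> \<alpha> \<beta> \<epsilon> m x0"
      by auto
    have A: "2 * \<phi> \<alpha> * \<phi> x0 + \<phi> \<beta> * x0 - \<phi> m - \<beta> * x0 = 0"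
    proof (rule ccontr)
      assume "2 * \<phi> \<alpha> * \<phi> x0 + \<phi> \<beta> * x0 - \<phi> m - \<beta> * x0 \<noteq> 0"
      from tangent_exist[OF x0(2) this] obtain x1 where x1: "x1 \<noteq> x0" "\<phi> (FF \<phi> \<alpha> \<beta> \<epsilon> m x1) = FF \<phi> \<alpha> \<beta> \<epsilon> m x1"
        by blast
      hence "pt (x1, m * x1 + \<epsilon>, 1) \<in> {Q}" using S by blast
      thus False using x0(1) x1(1) by (simp add: pt_eq1)
    qed
    hence pm: "\<phi> m = 2 * \<phi> \<alpha> * \<phi> x0 + (\<phi> \<beta> - \<beta>) * x0" by (simp add: algebra_simps)
    have m: "m = 2 * \<alpha> * x0 + (\<beta> - \<phi> \<beta>) * \<phi> x0"
      using arg_cong[OF pm, of \<phi>] by (simp add: phi_simps)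
    have "\<alpha> * x0^2 - \<phi> \<alpha> * (\<phi> x0)^2 + (\<beta> - \<phi> \<beta>) * x0 * \<phi> x0 + 2 * \<epsilon> = 0"
      using FF_special[of x0] x0(2) unfolding m by simp
    moreover have "m * x0 + \<epsilon> = 2 * \<alpha> * x0^2 + (\<beta> - \<phi> \<beta>) * x0 * \<phi> x0 + \<epsilon>"
      unfolding m by (simp add: algebra_simps power2_eq_square)
    ultimately show ?thesis using x0(1) by auto
  qed
next
  fix Q assume "Q \<in> {pt (x, 2 * \<alpha> * x^2 + (\<beta> - \<phi> \<beta>) * x * \<phi> x + \<epsilon>, 1) | x.
        \<alpha> * x^2 - \<phi> \<alpha> * (\<phi> x)^2 + (\<beta> - \<phi> \<beta>) * x * \<phi> x + 2 * \<epsilon> = 0}"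
  then obtain x0 where x0: "Q = pt (x0, 2 * \<alpha> * x0^2 + (\<beta> - \<phi> \<beta>) * x0 * \<phi> x0 + \<epsilon>, 1)"
    "\<alpha> * x0^2 - \<phi> \<alpha> * (\<phi> x0)^2 + (\<beta> - \<phi> \<beta>) * x0 * \<phi> x0 + 2 * \<epsilon> = 0" by blast
  define m where "m = 2 * \<alpha> * x0 + (\<beta> - \<phi> \<beta>) * \<phi> x0"
  define L where "L = line_of (-m) 1 (-\<epsilon>)"
  have pm: "\<phi> m = 2 * \<phi> \<alpha> * \<phi> x0 + (\<phi> \<beta> - \<beta>) * x0" unfolding m_def by (simp add: phi_simps)
  have F0: "\<phi> (FF \<phi> \<alpha> \<beta> \<epsilon> m x0) = FF \<phi> \<alpha> \<beta> \<epsilon> m x0"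
    using FF_special[of x0] x0(2) unfolding m_def by simp
  have Qe: "Q = pt (x0, m * x0 + \<epsilon>, 1)" unfolding x0(1) m_def by (simp add: algebra_simps power2_eq_square)
  have "L \<inter> UU \<phi> \<alpha> \<beta> = {pt (x, m * x + \<epsilon>, 1) | x. \<phi> (FF \<phi> \<alpha> \<beta> \<epsilon> m x) = FF \<phi> \<alpha> \<beta> \<epsilon> m x}"
    unfolding L_def using S_char[of m] by (simp add: Int_commute)
  also have "\<dots> = {Q}"
  proof (intro equalityI subsetI)
    fix P assume "P \<in> {pt (x, m * x + \<epsilon>, 1) | x. \<phi> (FF \<phi> \<alpha> \<beta> \<epsilon> m x) = FF \<phi> \<alpha> \<beta> \<epsilon> m x}"
    then obtain x1 where "P = pt (x1, m * x1 + \<epsilon>, 1)" "\<phi> (FF \<phi> \<alpha> \<beta> \<epsilon> m x1) = FF \<phi> \<alpha> \<beta> \<epsilon> m x1" by blast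
    thus "P \<in> {Q}" using tangent_unique[OF pm F0] Qe by auto
  qed (use Qe F0 in auto)
  finally have LU: "L \<inter> UU \<phi> \<alpha> \<beta> = {Q}" .
  have "L \<in> lines" unfolding lines_def L_def
    by (rule CollectI, rule exI[of _ "-m"], rule exI[of _ 1], rule exI[of _ "-\<epsilon>"]) simp
  hence "tangent_line (UU \<phi> \<alpha> \<beta>) L" unfolding tangent_line_def LU by simp
  moreover have "pt (0, \<epsilon>, 1) \<in> L" unfolding L_def by (subst pt_in_line) simp_all
  ultimately show "Q \<in> pedal (UU \<phi> \<alpha> \<beta>) (pt (0, \<epsilon>, 1))" unfolding pedal_def using LU by blast
qed

lemma pencil_part:
  assumes "Q \<in> pedal (UU \<phi> \<alpha> \<beta>) (pt (0, \<epsilon>, 1))"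
  shows "\<exists>L \<in> pencil (pt (1, 0, 0)) ({pt (0, s - \<epsilon>, 1) | s. \<phi> s = s} \<union> {pt (0, 1, 0)}). Q \<in> L"
proof -
  obtain x where x: "Q = pt (x, 2 * \<alpha> * x^2 + (\<beta> - \<phi> \<beta>) * x * \<phi> x + \<epsilon>, 1)"
    "\<alpha> * x^2 - \<phi> \<alpha> * (\<phi> x)^2 + (\<beta> - \<phi> \<beta>) * x * \<phi> x + 2 * \<epsilon> = 0"
    using assms unfolding pedal_char by blast
  define y where "y = 2 * \<alpha> * x^2 + (\<beta> - \<phi> \<beta>) * x * \<phi> x + \<epsilon>"
  define s where "s = \<alpha> * x^2 + \<phi> \<alpha> * (\<phi> x)^2"
  have ps: "\<phi> s = s" unfolding s_def by (simp add: phi_simps add.commute)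
  have ys: "y = s - \<epsilon>"
  proof -
    have "y - (s - \<epsilon>) = \<alpha> * x^2 - \<phi> \<alpha> * (\<phi> x)^2 + (\<beta> - \<phi> \<beta>) * x * \<phi> x + 2 * \<epsilon>"
      unfolding y_def s_def by (simp add: algebra_simps)
    thus ?thesis using x(2) by simp
  qed
  define L where "L = line_of 0 1 (-y)"
  have "L \<in> lines" unfolding lines_def L_def
    by (rule CollectI, rule exI[of _ 0], rule exI[of _ 1], rule exI[of _ "-y"]) simp
  moreover have "pt (1, 0, 0) \<in> L" unfolding L_def by (subst pt_in_line) simp_all
  moreover have "pt (0, s - \<epsilon>, 1) \<in> L" unfolding L_def ys[symmetric] by (subst pt_in_line) simp_all
  moreover have "Q \<in> L" unfolding L_def x(1) y_def[symmetric] by (subst pt_in_line) simp_all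
  moreover have "pt (0, s - \<epsilon>, 1) \<in> {pt (0, s - \<epsilon>, 1) | s. \<phi> s = s} \<union> {pt (0, 1, 0)}" using ps by blast
  ultimately show ?thesis unfolding pencil_def join_lines_def by blast
qed

end



theorem lemma2p2:
  fixes q :: nat and \<alpha> \<beta> \<zeta> :: "'a::{field,finite}"
  assumes card: "card (UNIV :: 'a set) = q ^ 2"
    and odd_q: "odd q"
    and prim: "primitive_elem \<zeta>"
    and \<alpha>0: "\<alpha> \<noteq> 0"
    and nonsq: "\<not> (\<exists>y::'a. y ^ q = y \<and> y ^ 2 = (\<beta> ^ q - \<beta>) ^ 2 + 4 * \<alpha> ^ (q + 1))"
  defines "\<epsilon> \<equiv> \<zeta> ^ ((q + 1) div 2)"
  shows "pedal (unitalU q \<alpha> \<beta>) (pt (0, \<epsilon>, 1)) =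
           {pt (x, 2 * \<alpha> * x ^ 2 + (\<beta> - \<beta> ^ q) * x ^ (q + 1) + \<epsilon>, 1) | x.
              \<alpha> * x ^ 2 - \<alpha> ^ q * x ^ (2 * q) + (\<beta> - \<beta> ^ q) * x ^ (q + 1) + 2 * \<epsilon> = 0}
       \<and> (\<forall>Q \<in> pedal (unitalU q \<alpha> \<beta>) (pt (0, \<epsilon>, 1)).
            \<exists>L \<in> pencil (pt (1, 0, 0))
                   ({pt (0, s - \<epsilon>, 1) | s. s ^ q = s} \<union> {pt (0, 1, 0)}). Q \<in> L)"
proof -
  have e: "\<epsilon> \<noteq> 0" "\<epsilon> ^ q = - \<epsilon>" "\<epsilon> ^ q \<noteq> \<epsilon>"
    using eps_facts[OF card odd_q prim] unfolding \<epsilon>_def by auto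
  have h1: "\<And>x y. (x + y :: 'a) ^ q = x ^ q + y ^ q" by (rule frob_add[OF card])
  have h2: "\<And>x y. (x * y :: 'a) ^ q = x ^ q * y ^ q" by (rule power_mult_distrib)
  have h3: "\<And>x. ((x :: 'a) ^ q) ^ q = x"
  proof -
    fix x :: 'a
    have "(x ^ q) ^ q = x ^ card (UNIV :: 'a set)" unfolding card by (simp add: power_mult[symmetric] power2_eq_square)
    thus "(x ^ q) ^ q = x" by (simp add: power_card_same)
  qed
  have h4: "(1::'a) ^ q = 1" by simp
  have two0: "(2::'a) \<noteq> 0"
  proof
    assume "(2::'a) = 0"
    hence "\<epsilon> + \<epsilon> = 0" by (metis mult_2 mult_zero_left)
    hence "- \<epsilon> = \<epsilon>" by (metis add_eq_0_iff2)
    thus False using e by simp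
  qed
  have ns: "\<not> (\<exists>y. y ^ q = y \<and> y^2 = (\<beta> ^ q - \<beta>)^2 + 4 * \<alpha> * \<alpha> ^ q)"
  proof -
    have "\<alpha> ^ (q + 1) = \<alpha> * \<alpha> ^ q" by simp
    thus ?thesis using nonsq by (simp add: mult.assoc)
  qed
  have U: "unitalU q \<alpha> \<beta> = UU (\<lambda>x. x ^ q) \<alpha> \<beta>"
  proof -
    have "\<And>x::'a. x ^ (q + 1) = x * x ^ q" by simp
    thus ?thesis unfolding unitalU_def UU_def by (simp add: mult.assoc)
  qed
  have P: "pedal (UU (\<lambda>x. x ^ q) \<alpha> \<beta>) (pt (0, \<epsilon>, 1)) =
     {pt (x, 2 * \<alpha> * x^2 + (\<beta> - \<beta> ^ q) * x * x ^ q + \<epsilon>, 1) | x.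
        \<alpha> * x^2 - \<alpha> ^ q * (x ^ q)^2 + (\<beta> - \<beta> ^ q) * x * x ^ q + 2 * \<epsilon> = 0}"
    by (rule pedal_char[of "\<lambda>x. x ^ q"]) (use h1 h2 h3 e two0 ns in auto)
  have S: "{pt (x, 2 * \<alpha> * x^2 + (\<beta> - \<beta> ^ q) * x * x ^ q + \<epsilon>, 1) | x.
        \<alpha> * x^2 - \<alpha> ^ q * (x ^ q)^2 + (\<beta> - \<beta> ^ q) * x * x ^ q + 2 * \<epsilon> = 0} =
        {pt (x, 2 * \<alpha> * x ^ 2 + (\<beta> - \<beta> ^ q) * x ^ (q + 1) + \<epsilon>, 1) | x.
              \<alpha> * x ^ 2 - \<alpha> ^ q * x ^ (2 * q) + (\<beta> - \<beta> ^ q) * x ^ (q + 1) + 2 * \<epsilon> = 0}"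
  proof -
    have "\<And>x::'a. x ^ (q + 1) = x * x ^ q" by simp
    moreover have "\<And>x::'a. x ^ (2 * q) = (x ^ q) ^ 2" by (simp add: power_mult[symmetric] mult.commute)
    ultimately show ?thesis by (simp add: mult.assoc)
  qed
  have B: "\<forall>Q \<in> pedal (UU (\<lambda>x. x ^ q) \<alpha> \<beta>) (pt (0, \<epsilon>, 1)).
            \<exists>L \<in> pencil (pt (1, 0, 0))
                   ({pt (0, s - \<epsilon>, 1) | s. s ^ q = s} \<union> {pt (0, 1, 0)}). Q \<in> L"
  proof
    fix Q assume Q: "Q \<in> pedal (UU (\<lambda>x. x ^ q) \<alpha> \<beta>) (pt (0, \<epsilon>, 1))"
    show "\<exists>L \<in> pencil (pt (1, 0, 0)) ({pt (0, s - \<epsilon>, 1) | s. s ^ q = s} \<union> {pt (0, 1, 0)}). Q \<in> L"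
      by (rule pencil_part[of "\<lambda>x. x ^ q"]) (use h1 h2 h3 e two0 ns Q in auto)
  qed
  show ?thesis unfolding U using P S B by simp
qed

end
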